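(* For $0<\mu<1$ and $x\in\mathbb T^2$ let $K^+(x)=\{v=(v_1,v_2)\in\mathbb R^2:|v_2|<\mu|v_1|\}$ and $K^-(x)=\{v=(v_1,v_2):|v_1|<\mu|v_2|\}$ (tangent vectors written in the coordinates given by the eigendirections of $A$). There exists $0<\mu_0<1$ such that for all $\mu_0<\mu<1$ and all $x\in\mathbb T^2$, $$DG\,K^+(x)\subseteq K^+(G(x)),\qquad (DG)^{-1}K^-(G(x))\subseteq K^-(x).$$
   Context: Let $A=\begin{pmatrix}2&1\\1&1\end{pmatrix}$ on $\mathbb T^2$, $\lambda>1$ its largest eigenvalue, $(s_1,s_2)$ eigen-coordinates ($s_1$ expanding, $s_2$ contracting). Fix $0<\alpha<1$, $0<r_0<1$ and $\psi:[0,1]\to[0,1]$, $C^\infty$ except at $0$, with $\psi=1$ on $[r_0,1]$, $\psi'>0$ and decreasing on $(0,r_0)$, and $\psi(u)=(u/r_0)^\alpha$ for $0\le u\le r_0/2$. Let $D_r=\{s_1^2+s_2^2\le r\}$ (with $D_{r_0}\subset\mathrm{Int}\,A(D_{r_1})\cap\mathrm{Int}\,A^{-1}(D_{r_1})$, $r_1=2r_0\log\lambda$). $G$ is the homeomorphism of $\mathbb T^2$ equal to $A$ outside $D_{r_0}$ and, on $D_{r_0}$, to the time-one map of the flow $\dot s_1=s_1\psi(s_1^2+s_2^2)\log\lambda$, $\dot s_2=-s_2\psi(s_1^2+s_2^2)\log\lambda$. *)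

theory Defs
  imports "HOL-Analysis.Analysis"
begin

text \<open>Points of the torus T^2 = R^2/Z^2 are represented by lifts
  p :: real \<times> real in the standard coordinates; the lattice is Z \<times> Z.
  Eigen-coordinates (s1, s2) are orthonormal coordinates along the unit
  eigenvectors e1 (eigenvalue lam, expanding) and e2 (eigenvalue 1/lam, contracting)
  of A = [[2,1],[1,1]].\<close>

definition lam :: real where
  "lam = (3 + sqrt 5) / 2"

definition eig_norm :: real where
  "eig_norm = sqrt (1 + (lam - 2)^2)"

definition e1 :: "real \<times> real" where
  "e1 = (1 / eig_norm, (lam - 2) / eig_norm)"

definition e2 :: "real \<times> real" where
  "e2 = ((2 - lam) / eig_norm, 1 / eig_norm)"

definition Amap :: "real \<times> real \<Rightarrow> real \<times> real" where
  "Amap p = (2 * fst p + snd p, fst p + snd p)"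

definition ec :: "real \<times> real \<Rightarrow> real \<times> real" where
  "ec p = (p \<bullet> e1, p \<bullet> e2)"

definition int_lattice :: "(real \<times> real) set" where
  "int_lattice = {(of_int a, of_int b) | a b. True}"

definition Aeig :: "real \<times> real \<Rightarrow> real \<times> real" where
  "Aeig s = (lam * fst s, snd s / lam)"

definition in_disk :: "real \<Rightarrow> real \<times> real \<Rightarrow> bool" where
  "in_disk r p \<longleftrightarrow> (\<exists>n\<in>int_lattice. (fst (ec (p - n)))^2 + (snd (ec (p - n)))^2 \<le> r)"

text \<open>psi is only given on [0,1]; it is extended by 1 beyond 1 (it equals 1 on [r0,1]).\<close>
definition psi_ext :: "(real \<Rightarrow> real) \<Rightarrow> real \<Rightarrow> real" where
  "psi_ext psi u = (if u \<le> 1 then psi u else 1)"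

definition vfield :: "(real \<Rightarrow> real) \<Rightarrow> real \<times> real \<Rightarrow> real \<times> real" where
  "vfield psi s =
     (fst s * psi_ext psi ((fst s)^2 + (snd s)^2) * ln lam,
      - snd s * psi_ext psi ((fst s)^2 + (snd s)^2) * ln lam)"

definition flow1 :: "(real \<Rightarrow> real) \<Rightarrow> real \<times> real \<Rightarrow> real \<times> real" where
  "flow1 psi s =
     (THE y. y 0 = s \<and> (\<forall>t. (y has_vector_derivative vfield psi (y t)) (at t))) 1"

text \<open>DG_at psi r0 p L: L is the derivative DG(x) of G at the point x of T^2 with lift p,
  expressed in eigen-coordinates (tangent vectors at x and at G(x) both written in
  the eigen-coordinates).  On D_{r0}, G is the time-one map of the flow (read in the
  local eigen-coordinate chart s = ec (p - n) centred at the lattice point n);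
  outside D_{r0}, G = A, whose derivative in eigen-coordinates is diag(lam, 1/lam).\<close>
definition DG_at :: "(real \<Rightarrow> real) \<Rightarrow> real \<Rightarrow> real \<times> real \<Rightarrow> (real \<times> real \<Rightarrow> real \<times> real) \<Rightarrow> bool" where
  "DG_at psi r0 p L \<longleftrightarrow>
     (\<exists>n\<in>int_lattice. (fst (ec (p - n)))^2 + (snd (ec (p - n)))^2 \<le> r0 \<and>
        (flow1 psi has_derivative L) (at (ec (p - n))))
     \<or> (\<not> in_disk r0 p \<and> L = Aeig)"

text \<open>The cones (the same set at every point, in eigen-coordinates).\<close>
definition Kplus :: "real \<Rightarrow> (real \<times> real) set" where
  "Kplus \<mu> = {v. \<bar>snd v\<bar> < \<mu> * \<bar>fst v\<bar>}"

definition Kminus :: "real \<Rightarrow> (real \<times> real) set" where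
  "Kminus \<mu> = {v. \<bar>fst v\<bar> < \<mu> * \<bar>snd v\<bar>}"

end

theory Submission
  imports Defs
begin

lemma mono_split:
  fixes f :: "real \<Rightarrow> real"
  assumes ab: "a \<le> b" and con: "continuous_on {a..b} f"
    and der: "\<And>x. a < x \<Longrightarrow> x < b \<Longrightarrow> x \<noteq> x0 \<Longrightarrow> \<exists>y. DERIV f x :> y \<and> 0 \<le> y"
  shows "f a \<le> f b"
proof (cases "a < x0 \<and> x0 < b")
  case True
  have "f a \<le> f x0"
    by (rule DERIV_nonneg_imp_increasing_open) (use True der in \<open>auto intro: continuous_on_subset[OF con]\<close>)
  moreover have "f x0 \<le> f b"
    by (rule DERIV_nonneg_imp_increasing_open) (use True der in \<open>auto intro: continuous_on_subset[OF con]\<close>)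
  ultimately show ?thesis by simp
next
  case False
  show ?thesis
    by (rule DERIV_nonneg_imp_increasing_open) (use False der ab con in auto)
qed

definition Qc :: "real \<Rightarrow> real \<times> real \<Rightarrow> real" where
  "Qc c w = c^2 * (fst w)^2 - (snd w)^2"

lemma lam_gt1: "lam > 1"
proof -
  have "sqrt 5 > 0" by simp
  then show ?thesis unfolding lam_def by (simp add: add_pos_nonneg)
qed

lemma ln_lam_pos: "ln lam > 0" using lam_gt1 by simp

locale fctx =
  fixes psi :: "real \<Rightarrow> real" and D :: "real \<Rightarrow> real"
  assumes bnd: "\<And>u. 0 \<le> u \<Longrightarrow> 0 \<le> psi_ext psi u \<and> psi_ext psi u \<le> 1"
    and der: "\<And>u. 0 < u \<Longrightarrow> (psi_ext psi has_real_derivative D u) (at u)"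
    and Dnn: "\<And>u. 0 < u \<Longrightarrow> 0 \<le> D u"
    and Dle: "\<And>u. 0 < u \<Longrightarrow> u * D u \<le> psi_ext psi u"
    and pos: "\<And>u. 0 < u \<Longrightarrow> 0 < psi_ext psi u"
begin

abbreviation "\<phi> \<equiv> psi_ext psi"

lemma seg_mono:
  fixes z1 z2 d1 d2 p q K :: real
  assumes H: "\<And>x1 x2. (x1, x2) \<noteq> (0,0) \<Longrightarrow> K \<le> (p*d1+q*d2) * \<phi>(x1^2+x2^2)
       + 2*(p*x1+q*x2)*(x1*d1+x2*d2) * D (x1^2+x2^2)"
  shows "K \<le> (p*(z1+d1)+q*(z2+d2)) * \<phi>((z1+d1)^2+(z2+d2)^2) - (p*z1+q*z2)*\<phi>(z1^2+z2^2)"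
proof (cases "d1 = 0 \<and> d2 = 0")
  case True
  have "K \<le> 0" using H[of 1 0] True by simp
  then show ?thesis using True by simp
next
  case dnz: False
  define h where "h \<theta> = (p*(z1+\<theta>*d1)+q*(z2+\<theta>*d2)) * \<phi>((z1+\<theta>*d1)^2+(z2+\<theta>*d2)^2)" for \<theta>
  define u where "u \<theta> = (z1+\<theta>*d1)^2+(z2+\<theta>*d2)^2" for \<theta>
  have hder: "(h has_real_derivative (p*d1+q*d2) * \<phi>(u \<theta>)
       + 2*(p*(z1+\<theta>*d1)+q*(z2+\<theta>*d2))*((z1+\<theta>*d1)*d1+(z2+\<theta>*d2)*d2) * D (u \<theta>)) (at \<theta>)"
    if nz: "(z1+\<theta>*d1, z2+\<theta>*d2) \<noteq> (0,0)" for \<theta>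
  proof -
    have up: "0 < u \<theta>" using nz unfolding u_def by (simp add: sum_power2_gt_zero_iff)
    have du: "(u has_real_derivative 2*(z1+\<theta>*d1)*d1 + 2*(z2+\<theta>*d2)*d2) (at \<theta>)"
      unfolding u_def by (auto intro!: derivative_eq_intros simp: algebra_simps)
    have dphi: "((\<lambda>t. \<phi> (u t)) has_real_derivative D (u \<theta>) * (2*(z1+\<theta>*d1)*d1 + 2*(z2+\<theta>*d2)*d2)) (at \<theta>)"
      by (rule DERIV_chain2[OF der[OF up] du])
    have dlin: "((\<lambda>t. p*(z1+t*d1)+q*(z2+t*d2)) has_real_derivative p*d1+q*d2) (at \<theta>)"
      by (auto intro!: derivative_eq_intros)
    have "h = (\<lambda>t. (p*(z1+t*d1)+q*(z2+t*d2)) * \<phi> (u t))" unfolding h_def u_def by simp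
    then show ?thesis using DERIV_mult[OF dlin dphi]
      by (simp add: algebra_simps)
  qed
  obtain x0 where x0: "\<And>\<theta>. (z1+\<theta>*d1, z2+\<theta>*d2) = (0,0) \<Longrightarrow> \<theta> = x0"
  proof (cases "\<exists>\<theta>. (z1+\<theta>*d1, z2+\<theta>*d2) = (0,0)")
    case True
    then obtain t0 where t0: "(z1+t0*d1, z2+t0*d2) = (0,0)" by blast
    show ?thesis
    proof (rule that)
      fix \<theta> assume "(z1+\<theta>*d1, z2+\<theta>*d2) = (0,0)"
      with t0 have "z1+\<theta>*d1 = 0" "z1 + t0*d1 = 0" "z2+\<theta>*d2 = 0" "z2 + t0*d2 = 0" by auto
      moreover have "(\<theta>-t0)*d1 = (z1+\<theta>*d1) - (z1 + t0*d1)" "(\<theta>-t0)*d2 = (z2+\<theta>*d2) - (z2 + t0*d2)"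
        by (simp_all add: algebra_simps)
      ultimately have "(\<theta>-t0)*d1 = 0" "(\<theta>-t0)*d2 = 0" by simp_all
      with dnz show "\<theta> = t0" by auto
    qed
  next
    case False then show ?thesis using that by blast
  qed
  have cont: "isCont h \<theta>" for \<theta>
  proof (cases "(z1+\<theta>*d1, z2+\<theta>*d2) = (0,0)")
    case False then show ?thesis using hder DERIV_isCont by blast
  next
    case True
    have h0: "h \<theta> = 0" using True unfolding h_def by simp
    have lim: "((\<lambda>t. \<bar>p*(z1+t*d1)+q*(z2+t*d2)\<bar>) \<longlongrightarrow> \<bar>p*(z1+\<theta>*d1)+q*(z2+\<theta>*d2)\<bar>) (at \<theta>)"
      by (intro tendsto_intros)
    then have lim0: "((\<lambda>t. \<bar>p*(z1+t*d1)+q*(z2+t*d2)\<bar>) \<longlongrightarrow> 0) (at \<theta>)" using True by simp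
    have "(h \<longlongrightarrow> 0) (at \<theta>)"
    proof (rule Lim_null_comparison[OF _ lim0], rule always_eventually, rule allI)
      fix t
      have "0 \<le> \<phi> ((z1+t*d1)^2+(z2+t*d2)^2) \<and> \<phi> ((z1+t*d1)^2+(z2+t*d2)^2) \<le> 1"
        by (rule bnd) simp
      then show "norm (h t) \<le> \<bar>p*(z1+t*d1)+q*(z2+t*d2)\<bar>"
        unfolding h_def by (auto simp: abs_mult intro: mult_left_le)
    qed
    then show ?thesis using h0 by (simp add: isCont_def)
  qed
  define g where "g \<theta> = h \<theta> - K * \<theta>" for \<theta>
  have "g 0 \<le> g 1"
  proof (rule mono_split[where f=g and a=0 and b=1 and ?x0.0=x0])
    have hc: "continuous_on {0..1} h"
      by (intro continuous_at_imp_continuous_on) (use cont in auto)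
    show "continuous_on {0..1} g" unfolding g_def
      by (intro continuous_intros hc)
  next
    fix x :: real assume x: "0 < x" "x < 1" "x \<noteq> x0"
    then have nz: "(z1+x*d1, z2+x*d2) \<noteq> (0,0)" using x0 by blast
    then obtain x1 x2 where s: "x1 = z1+x*d1" "x2 = z2+x*d2" by blast
    have "K \<le> (p*d1+q*d2) * \<phi>(x1^2+x2^2) + 2*(p*x1+q*x2)*(x1*d1+x2*d2) * D (x1^2+x2^2)"
      using H nz s by blast
    then show "\<exists>y. DERIV g x :> y \<and> 0 \<le> y"
      unfolding g_def using DERIV_diff[OF hder[OF nz], of "\<lambda>t. K*t" K] s
      by (intro exI[of _ "_ - K"]) (auto simp: u_def intro!: derivative_eq_intros)
  qed simp
  then show ?thesis unfolding g_def h_def by simp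
qed

end

lemma cone_ineq:
  fixes c F P u x1 x2 d1 d2 :: real
  assumes c: "0 < c" "1 + c^2 \<le> 3*c" and P: "0 \<le> P" and F: "u*P \<le> F" and u: "u = x1^2 + x2^2"
  shows "0 \<le> (c^2*d1*d1 + d2*d2) * F + 2*(c^2*d1*x1 + d2*x2)*(x1*d1 + x2*d2) * P"
proof -
  define a where "a = c*x1*d1"
  define b where "b = x2*d2"
  define W where "W = c^2*d1^2 + d2^2"
  define X where "X = (c^2*d1*x1 + d2*x2)*(x1*d1 + x2*d2)"
  have W0: "0 \<le> W" unfolding W_def by simp
  have u0: "0 \<le> u" using u by simp
  have F0: "0 \<le> F" using F P u0 by (meson mult_nonneg_nonneg order_trans)
  have e1: "2*c*X = 2*c*(a^2+b^2) + 2*(1+c^2)*(a*b)"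
    unfolding X_def a_def b_def by (simp add: power2_eq_square algebra_simps)
  have e2: "-(a^2+b^2) \<le> 2*(a*b)"
  proof -
    have "0 \<le> (a+b)^2" by simp
    then show ?thesis by (simp add: power2_eq_square algebra_simps)
  qed
  have "2*(1+c^2)*(a*b) \<ge> (1+c^2) * (-(a^2+b^2))"
    using mult_left_mono[OF e2, of "1+c^2"] by (simp add: algebra_simps)
  then have e3: "2*c*X \<ge> -((1-c)^2*(a^2+b^2))"
    using e1 by (simp add: power2_eq_square algebra_simps)
  have e4: "a^2 + b^2 \<le> u * W"
  proof -
    have "a^2 = c^2*d1^2*x1^2" unfolding a_def by (simp add: power_mult_distrib)
    also have "\<dots> \<le> c^2*d1^2*u" using u by (intro mult_left_mono) auto
    finally have "a^2 \<le> c^2*d1^2*u" .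
    moreover have "b^2 \<le> d2^2*u"
    proof -
      have "b^2 = d2^2*x2^2" unfolding b_def by (simp add: power_mult_distrib)
      also have "\<dots> \<le> d2^2*u" using u by (intro mult_left_mono) auto
      finally show ?thesis .
    qed
    ultimately show ?thesis unfolding W_def by (simp add: algebra_simps)
  qed
  have e5: "(1-c)^2*(a^2+b^2) \<le> (1-c)^2*(u*W)"
    using e4 by (intro mult_left_mono) auto
  have e6: "P*((1-c)^2*(a^2+b^2)) \<le> (1-c)^2*((u*P)*W)"
    using mult_left_mono[OF e5 P] by (simp add: algebra_simps)
  have e7: "(1-c)^2*((u*P)*W) \<le> (1-c)^2*(F*W)"
    using F W0 by (intro mult_left_mono mult_right_mono) auto
  have e8: "(1-c)^2 \<le> c" using c by (simp add: power2_eq_square algebra_simps)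
  have e9: "(1-c)^2*(F*W) \<le> c*(F*W)"
    using e8 F0 W0 by (intro mult_right_mono) auto
  have e10: "P*(2*c*X) \<ge> - (P*((1-c)^2*(a^2+b^2)))"
    using mult_left_mono[OF e3 P] by simp
  have "c * (W*F + 2*X*P) = c*(F*W) + P*(2*c*X)" by (simp add: algebra_simps)
  also have "\<dots> \<ge> 0" using e6 e7 e9 e10 by linarith
  finally have "0 \<le> c * (W*F + 2*X*P)" .
  then have "0 \<le> W*F + 2*X*P" using c by (simp add: zero_le_mult_iff)
  then show ?thesis unfolding W_def X_def by (simp add: power2_eq_square algebra_simps)
qed

lemma lip_ineq:
  fixes F P u x1 x2 d1 d2 :: real
  assumes F1: "F \<le> 1" and P: "0 \<le> P" and F: "u*P \<le> F" and u: "u = x1^2 + x2^2"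
  shows "\<bar>(d1*d1 - d2*d2) * F + 2*(d1*x1 - d2*x2)*(x1*d1 + x2*d2) * P\<bar> \<le> 3*(d1^2+d2^2)"
proof -
  have u0: "0 \<le> u" using u by simp
  have F0: "0 \<le> F" using F P u0 by (meson mult_nonneg_nonneg order_trans)
  have t1: "\<bar>(d1*d1 - d2*d2) * F\<bar> \<le> d1^2+d2^2"
  proof -
    have "\<bar>(d1*d1 - d2*d2) * F\<bar> = \<bar>d1*d1 - d2*d2\<bar> * F" using F0 by (simp add: abs_mult)
    also have "\<dots> \<le> \<bar>d1*d1 - d2*d2\<bar> * 1" using F1 by (intro mult_left_mono) auto
    also have "\<dots> \<le> d1^2+d2^2"
    proof -
      have "0 \<le> d1*d1" "0 \<le> d2*d2" by auto
      then show ?thesis by (simp add: power2_eq_square abs_le_iff)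
    qed
    finally show ?thesis .
  qed
  have x: "(d1*x1 - d2*x2)*(x1*d1 + x2*d2) = d1^2*x1^2 - d2^2*x2^2"
    by (simp add: power2_eq_square algebra_simps)
  have y: "\<bar>d1^2*x1^2 - d2^2*x2^2\<bar> \<le> u*(d1^2+d2^2)"
  proof -
    have "d1^2*x1^2 \<le> d1^2*u" using u by (intro mult_left_mono) auto
    moreover have "d2^2*x2^2 \<le> d2^2*u" using u by (intro mult_left_mono) auto
    moreover have "0 \<le> d1^2*x1^2" "0 \<le> d2^2*x2^2" by auto
    ultimately show ?thesis unfolding abs_le_iff distrib_left by (simp only: mult.commute) linarith
  qed
  have t2: "\<bar>2*(d1*x1 - d2*x2)*(x1*d1 + x2*d2) * P\<bar> \<le> 2*(d1^2+d2^2)"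
  proof -
    have "2*(d1*x1 - d2*x2)*(x1*d1 + x2*d2) * P = 2*(d1^2*x1^2 - d2^2*x2^2)*P"
      by (simp only: x[symmetric] mult.assoc)
    then have "\<bar>2*(d1*x1 - d2*x2)*(x1*d1 + x2*d2) * P\<bar> = \<bar>2*(d1^2*x1^2 - d2^2*x2^2)*P\<bar>"
      by (rule arg_cong)
    also have "\<dots> = 2*\<bar>d1^2*x1^2 - d2^2*x2^2\<bar>*P" using P by (simp only: abs_mult abs_of_nonneg)
    also have "\<dots> \<le> 2*(u*(d1^2+d2^2))*P" using y P by (intro mult_right_mono) auto
    also have "\<dots> = 2*(d1^2+d2^2)*(u*P)" by (simp add: algebra_simps)
    also have "\<dots> \<le> 2*(d1^2+d2^2)*1" using F F1 by (intro mult_left_mono) auto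
    finally show ?thesis by simp
  qed
  show ?thesis using t1 t2 by (smt (verit) abs_triangle_ineq)
qed

definition sol :: "(real \<Rightarrow> real) \<Rightarrow> real \<times> real \<Rightarrow> (real \<Rightarrow> real \<times> real) \<Rightarrow> bool" where
  "sol psi s y \<longleftrightarrow> y 0 = s \<and> (\<forall>t. (y has_vector_derivative vfield psi (y t)) (at t))"

lemma vd_fst: "(y has_vector_derivative v) (at t) \<Longrightarrow> ((\<lambda>t. fst (y t)) has_real_derivative fst v) (at t)"
proof -
  assume "(y has_vector_derivative v) (at t)"
  then have "((\<lambda>x. fst (y x)) has_derivative (\<lambda>x. fst (x *\<^sub>R v))) (at t)"
    unfolding has_vector_derivative_def by (rule has_derivative_fst)
  moreover have "(\<lambda>x. fst (x *\<^sub>R v)) = (*) (fst v)" by (auto simp: fun_eq_iff)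
  ultimately show ?thesis unfolding has_field_derivative_def by simp
qed

lemma vd_snd: "(y has_vector_derivative v) (at t) \<Longrightarrow> ((\<lambda>t. snd (y t)) has_real_derivative snd v) (at t)"
proof -
  assume "(y has_vector_derivative v) (at t)"
  then have "((\<lambda>x. snd (y x)) has_derivative (\<lambda>x. snd (x *\<^sub>R v))) (at t)"
    unfolding has_vector_derivative_def by (rule has_derivative_snd)
  moreover have "(\<lambda>x. snd (x *\<^sub>R v)) = (*) (snd v)" by (auto simp: fun_eq_iff)
  ultimately show ?thesis unfolding has_field_derivative_def by simp
qed

context fctx begin

lemma sol_der:
  assumes "sol psi s y"
  shows "((\<lambda>t. fst (y t)) has_real_derivative fst (y t) * \<phi>((fst (y t))^2 + (snd (y t))^2) * ln lam) (at t)"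
    "((\<lambda>t. snd (y t)) has_real_derivative - snd (y t) * \<phi>((fst (y t))^2 + (snd (y t))^2) * ln lam) (at t)"
  using vd_fst[of y "vfield psi (y t)" t] vd_snd[of y "vfield psi (y t)" t] assms
  by (auto simp: sol_def vfield_def)

lemma cone_mono:
  assumes c: "0 < c" "1 + c^2 \<le> 3*c" and y: "sol psi s y" and z: "sol psi s' z"
  shows "Qc c (y 0 - z 0) \<le> Qc c (y 1 - z 1)"
proof -
  define N where "N t = c^2*(fst (y t) - fst (z t))^2 - (snd (y t) - snd (z t))^2" for t
  have "N 0 \<le> N 1"
  proof (rule DERIV_nonneg_imp_nondecreasing[of 0 1 N])
    fix t :: real
    define y1 where "y1 = fst (y t)"
    define y2 where "y2 = snd (y t)"
    define z1 where "z1 = fst (z t)"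
    define z2 where "z2 = snd (z t)"
    define d1 where "d1 = y1 - z1"
    define d2 where "d2 = y2 - z2"
    define l where "l = ln lam"
    have dN: "(N has_real_derivative
       2*c^2*d1*(y1 * \<phi>(y1^2+y2^2) * l - z1 * \<phi>(z1^2+z2^2) * l)
       - 2*d2*(- y2 * \<phi>(y1^2+y2^2) * l - (- z2 * \<phi>(z1^2+z2^2) * l))) (at t)"
      unfolding N_def y1_def y2_def z1_def z2_def d1_def d2_def l_def
      by (auto intro!: derivative_eq_intros sol_der[OF y] sol_der[OF z])
    have S: "0 \<le> ((c^2*d1)*(z1+d1)+d2*(z2+d2)) * \<phi>((z1+d1)^2+(z2+d2)^2) - ((c^2*d1)*z1+d2*z2)*\<phi>(z1^2+z2^2)"
    proof (rule seg_mono)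
      fix x1 x2 :: real assume nz: "(x1, x2) \<noteq> (0,0)"
      then have up: "0 < x1^2+x2^2" by (simp add: sum_power2_gt_zero_iff)
      show "0 \<le> (c^2*d1*d1+d2*d2) * \<phi>(x1^2+x2^2) + 2*(c^2*d1*x1+d2*x2)*(x1*d1+x2*d2) * D (x1^2+x2^2)"
        by (rule cone_ineq[OF c Dnn[OF up] Dle[OF up] refl])
    qed
    have zd: "z1 + d1 = y1" "z2 + d2 = y2" unfolding d1_def d2_def by simp_all
    have l0: "0 < l" unfolding l_def by (rule ln_lam_pos)
    have "2*c^2*d1*(y1 * \<phi>(y1^2+y2^2) * l - z1 * \<phi>(z1^2+z2^2) * l)
       - 2*d2*(- y2 * \<phi>(y1^2+y2^2) * l - (- z2 * \<phi>(z1^2+z2^2) * l))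
      = 2*l*(((c^2*d1)*(z1+d1)+d2*(z2+d2)) * \<phi>((z1+d1)^2+(z2+d2)^2) - ((c^2*d1)*z1+d2*z2)*\<phi>(z1^2+z2^2))"
      unfolding zd by (simp add: algebra_simps)
    also have "\<dots> \<ge> 0" using S l0 by simp
    finally show "\<exists>y. (N has_real_derivative y) (at t) \<and> 0 \<le> y" using dN by blast
  qed simp
  then show ?thesis unfolding N_def Qc_def by simp
qed

end

context fctx begin

lemma sol_unique:
  assumes y: "sol psi s y" and z: "sol psi s z"
  shows "y = z"
proof -
  define N where "N t = (fst (y t) - fst (z t))^2 + (snd (y t) - snd (z t))^2" for t
  define l where "l = ln lam"
  have l0: "0 < l" unfolding l_def by (rule ln_lam_pos)
  have N0: "N 0 = 0" using y z unfolding N_def sol_def by simp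
  have Nnn: "0 \<le> N t" for t unfolding N_def by simp
  have dN: "\<exists>N'. (N has_real_derivative N') (at t) \<and> \<bar>N'\<bar> \<le> 6*l*N t" for t
  proof -
    define y1 where "y1 = fst (y t)"
    define y2 where "y2 = snd (y t)"
    define z1 where "z1 = fst (z t)"
    define z2 where "z2 = snd (z t)"
    define d1 where "d1 = y1 - z1"
    define d2 where "d2 = y2 - z2"
    have dN: "(N has_real_derivative
       2*d1*(y1 * \<phi>(y1^2+y2^2) * l - z1 * \<phi>(z1^2+z2^2) * l)
       + 2*d2*(- y2 * \<phi>(y1^2+y2^2) * l - (- z2 * \<phi>(z1^2+z2^2) * l))) (at t)"
      unfolding N_def y1_def y2_def z1_def z2_def d1_def d2_def l_def
      by (auto intro!: derivative_eq_intros sol_der[OF y] sol_der[OF z] simp: algebra_simps)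
    have H: "- (3*(d1^2+d2^2)) \<le> (p*d1+q*d2) * \<phi>(x1^2+x2^2) + 2*(p*x1+q*x2)*(x1*d1+x2*d2) * D (x1^2+x2^2)"
      if nz: "(x1, x2) \<noteq> (0,0)" and pq: "(p = d1 \<and> q = - d2) \<or> (p = - d1 \<and> q = d2)" for x1 x2 p q
    proof -
      from nz have up: "0 < x1^2+x2^2" by (simp add: sum_power2_gt_zero_iff)
      have "\<bar>(d1*d1 - d2*d2) * \<phi>(x1^2+x2^2) + 2*(d1*x1 - d2*x2)*(x1*d1 + x2*d2) * D (x1^2+x2^2)\<bar> \<le> 3*(d1^2+d2^2)"
        by (rule lip_ineq[OF conjunct2[OF bnd] Dnn[OF up] Dle[OF up] refl]) simp
      then show ?thesis using pq by (auto simp: algebra_simps abs_le_iff)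
    qed
    have S1: "- (3*(d1^2+d2^2)) \<le> (d1*(z1+d1)+(-d2)*(z2+d2)) * \<phi>((z1+d1)^2+(z2+d2)^2) - (d1*z1+(-d2)*z2)*\<phi>(z1^2+z2^2)"
      by (rule seg_mono) (rule H, auto)
    have S2: "- (3*(d1^2+d2^2)) \<le> ((-d1)*(z1+d1)+d2*(z2+d2)) * \<phi>((z1+d1)^2+(z2+d2)^2) - ((-d1)*z1+d2*z2)*\<phi>(z1^2+z2^2)"
      by (rule seg_mono) (rule H, auto)
    have zd: "z1 + d1 = y1" "z2 + d2 = y2" unfolding d1_def d2_def by simp_all
    define E where "E = (d1*(z1+d1)+(-d2)*(z2+d2)) * \<phi>((z1+d1)^2+(z2+d2)^2) - (d1*z1+(-d2)*z2)*\<phi>(z1^2+z2^2)"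
    have "2*d1*(y1 * \<phi>(y1^2+y2^2) * l - z1 * \<phi>(z1^2+z2^2) * l)
       + 2*d2*(- y2 * \<phi>(y1^2+y2^2) * l - (- z2 * \<phi>(z1^2+z2^2) * l)) = 2*l*E"
      unfolding E_def zd by (simp add: algebra_simps)
    moreover have "\<bar>E\<bar> \<le> 3*(d1^2+d2^2)"
    proof -
      have e2: "((-d1)*(z1+d1)+d2*(z2+d2)) * \<phi>((z1+d1)^2+(z2+d2)^2) - ((-d1)*z1+d2*z2)*\<phi>(z1^2+z2^2) = - E"
        unfolding E_def by (simp add: algebra_simps)
      have s1: "- (3*(d1^2+d2^2)) \<le> E" using S1 unfolding E_def .
      have s2: "- (3*(d1^2+d2^2)) \<le> - E" using S2 unfolding e2 .
      show ?thesis unfolding abs_le_iff using s1 s2 by linarith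
    qed
    moreover have "N t = d1^2 + d2^2" unfolding N_def d1_def d2_def y1_def y2_def z1_def z2_def by simp
    ultimately have "\<bar>2*d1*(y1 * \<phi>(y1^2+y2^2) * l - z1 * \<phi>(z1^2+z2^2) * l)
       + 2*d2*(- y2 * \<phi>(y1^2+y2^2) * l - (- z2 * \<phi>(z1^2+z2^2) * l))\<bar> \<le> 6*l*N t"
      using l0 by (simp add: abs_mult)
    then show ?thesis using dN by blast
  qed
  have Nz: "N t = 0" for t
  proof (cases "0 \<le> t")
    case True
    define M where "M t = exp (-(6*l*t)) * N t" for t
    have "M t \<le> M 0"
    proof (rule DERIV_nonpos_imp_nonincreasing[OF True])
      fix x
      obtain N' where N': "(N has_real_derivative N') (at x)" "\<bar>N'\<bar> \<le> 6*l*N x" using dN by blast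
      have "(M has_real_derivative exp (-(6*l*x)) * (-(6*l)) * N x + exp (-(6*l*x)) * N') (at x)"
        unfolding M_def by (auto intro!: derivative_eq_intros N'(1))
      moreover have "exp (-(6*l*x)) * (-(6*l)) * N x + exp (-(6*l*x)) * N' = exp (-(6*l*x)) * (N' - 6*l*N x)"
        by (simp add: algebra_simps)
      moreover have "exp (-(6*l*x)) * (N' - 6*l*N x) \<le> 0"
        using N'(2) by (intro mult_nonneg_nonpos) auto
      ultimately show "\<exists>y. (M has_real_derivative y) (at x) \<and> y \<le> 0" by auto
    qed
    then have "exp (-(6*l*t)) * N t \<le> 0" unfolding M_def using N0 by simp
    then show ?thesis using Nnn[of t] by (simp add: mult_le_0_iff)
  next
    case False
    then have tle: "t \<le> 0" by simp
    define M where "M t = exp (6*l*t) * N t" for t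
    have "M t \<le> M 0"
    proof (rule DERIV_nonneg_imp_nondecreasing[OF tle])
      fix x
      obtain N' where N': "(N has_real_derivative N') (at x)" "\<bar>N'\<bar> \<le> 6*l*N x" using dN by blast
      have "(M has_real_derivative exp (6*l*x) * (6*l) * N x + exp (6*l*x) * N') (at x)"
        unfolding M_def by (auto intro!: derivative_eq_intros N'(1))
      moreover have "exp (6*l*x) * (6*l) * N x + exp (6*l*x) * N' = exp (6*l*x) * (N' + 6*l*N x)"
        by (simp add: algebra_simps)
      moreover have "0 \<le> exp (6*l*x) * (N' + 6*l*N x)"
        using N'(2) by (intro mult_nonneg_nonneg) auto
      ultimately show "\<exists>y. (M has_real_derivative y) (at x) \<and> 0 \<le> y" by auto
    qed
    then have "exp (6*l*t) * N t \<le> 0" unfolding M_def using N0 by simp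
    then show ?thesis using Nnn[of t] by (simp add: mult_le_0_iff)
  qed
  show ?thesis
  proof
    fix t
    have "(fst (y t) - fst (z t))^2 + (snd (y t) - snd (z t))^2 = 0" using Nz[of t] unfolding N_def .
    then have "fst (y t) = fst (z t)" "snd (y t) = snd (z t)" by (simp_all add: sum_power2_eq_zero_iff)
    then show "y t = z t" by (simp add: prod_eq_iff)
  qed
qed

end

context fctx begin

lemma phi_cont: "0 < u \<Longrightarrow> isCont \<phi> u"
  using der DERIV_isCont by blast

lemma sol_exists_nz:
  fixes a b :: real
  assumes nz: "(a, b) \<noteq> (0, 0)"
  shows "\<exists>y. sol psi (a, b) y"
proof -
  define l where "l = ln lam"
  have l0: "0 < l" unfolding l_def by (rule ln_lam_pos)
  define w where "w \<sigma> = a^2*exp(2*\<sigma>) + b^2*exp(-2*\<sigma>)" for \<sigma>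
  have wpos: "0 < w \<sigma>" for \<sigma>
  proof -
    have "a \<noteq> 0 \<or> b \<noteq> 0" using nz by auto
    then show ?thesis unfolding w_def by (auto intro: add_pos_nonneg add_nonneg_pos)
  qed
  define G where "G \<sigma> = l * \<phi> (w \<sigma>)" for \<sigma>
  have Gpos: "0 < G \<sigma>" for \<sigma> unfolding G_def using l0 pos[OF wpos] by simp
  have Gle: "G \<sigma> \<le> l" for \<sigma> unfolding G_def using l0 bnd[of "w \<sigma>"] wpos[of \<sigma>] by simp
  have wcont: "isCont w \<sigma>" for \<sigma> unfolding w_def by (intro continuous_intros)
  have Gcont: "isCont G \<sigma>" for \<sigma>
    unfolding G_def by (intro continuous_intros isCont_o2[OF wcont phi_cont[OF wpos]])
  define fi where "fi \<sigma> = 1 / G \<sigma>" for \<sigma>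
  have ficont: "isCont fi \<sigma>" for \<sigma>
    unfolding fi_def using Gcont Gpos by (intro continuous_intros) (auto simp: less_imp_neq[symmetric])
  have fion: "continuous_on S fi" for S by (intro continuous_at_imp_continuous_on) (use ficont in auto)
  have fiint: "fi integrable_on {x..y}" for x y by (rule integrable_continuous_real[OF fion])
  have figt: "1/l \<le> fi \<sigma>" for \<sigma> unfolding fi_def using Gpos[of \<sigma>] Gle[of \<sigma>] l0
    by (simp add: frac_le)
  have fipos: "0 < fi \<sigma>" for \<sigma> unfolding fi_def using Gpos[of \<sigma>] by simp
  define I where "I x y = integral {x..y} fi" for x y
  have Icomb: "x \<le> y \<Longrightarrow> y \<le> z \<Longrightarrow> I x y + I y z = I x z" for x y z
    unfolding I_def by (rule Henstock_Kurzweil_Integration.integral_combine[OF _ _ fiint])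
  have Izero: "y \<le> x \<Longrightarrow> I x y = 0" for x y
  proof (cases "y = x")
    case True then show ?thesis unfolding I_def by simp
  next
    case False
    assume "y \<le> x"
    with False have "{x..y} = {}" by auto
    then show ?thesis unfolding I_def by simp
  qed
  define T where "T \<sigma> = I 0 \<sigma> - I \<sigma> 0" for \<sigma>
  have Tpos: "0 \<le> \<sigma> \<Longrightarrow> T \<sigma> = I 0 \<sigma>" for \<sigma> unfolding T_def using Izero[of 0 \<sigma>] by simp
  have Tneg: "\<sigma> \<le> 0 \<Longrightarrow> T \<sigma> = - I \<sigma> 0" for \<sigma> unfolding T_def using Izero[of \<sigma> 0] by simp
  have Tsplit: "b0 \<le> \<sigma> \<Longrightarrow> T \<sigma> = T b0 + I b0 \<sigma>" for b0 \<sigma>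
  proof -
    assume le: "b0 \<le> \<sigma>"
    consider "0 \<le> b0" | "\<sigma> \<le> 0" | "b0 \<le> 0" "0 \<le> \<sigma>" by linarith
    then show ?thesis
    proof cases
      case 1
      have "T \<sigma> = I 0 \<sigma>" "T b0 = I 0 b0" "I 0 b0 + I b0 \<sigma> = I 0 \<sigma>"
        using 1 le by (intro Tpos Icomb; linarith)+
      then show ?thesis by linarith
    next
      case 2
      have "T \<sigma> = - I \<sigma> 0" "T b0 = - I b0 0" "I b0 \<sigma> + I \<sigma> 0 = I b0 0"
        using 2 le by (intro Tneg Icomb; linarith)+
      then show ?thesis by linarith
    next
      case 3
      have "T \<sigma> = I 0 \<sigma>" "T b0 = - I b0 0" "I b0 0 + I 0 \<sigma> = I b0 \<sigma>"
        using 3 le by (intro Tpos Tneg Icomb; linarith)+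
      then show ?thesis by linarith
    qed
  qed
  have Tder: "(T has_real_derivative fi \<sigma>) (at \<sigma>)" for \<sigma>
  proof -
    have "((\<lambda>x. integral {\<sigma>-1..x} fi) has_real_derivative fi \<sigma>) (at \<sigma> within {\<sigma>-1..\<sigma>+1})"
      by (rule integral_has_real_derivative[OF fion]) auto
    moreover have "at \<sigma> within {\<sigma>-1..\<sigma>+1} = at \<sigma>"
      by (rule at_within_interior) simp
    ultimately have "((\<lambda>x. integral {\<sigma>-1..x} fi) has_real_derivative fi \<sigma>) (at \<sigma>)"
      by simp
    then have "((\<lambda>x. T (\<sigma>-1) + integral {\<sigma>-1..x} fi) has_real_derivative 0 + fi \<sigma>) (at \<sigma>)"
      by (rule DERIV_add[OF DERIV_const])
    then have "((\<lambda>x. T (\<sigma>-1) + integral {\<sigma>-1..x} fi) has_real_derivative fi \<sigma>) (at \<sigma>)"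
      by simp
    then show ?thesis
    proof (rule has_field_derivative_transform_within_open[where S="{\<sigma>-1<..<\<sigma>+1}"])
      fix x assume "x \<in> {\<sigma>-1<..<\<sigma>+1}"
      then have "\<sigma>-1 \<le> x" by simp
      then have "T x = T (\<sigma>-1) + I (\<sigma>-1) x" by (rule Tsplit)
      then show "T (\<sigma>-1) + integral {\<sigma>-1..x} fi = T x" unfolding I_def by linarith
    qed auto
  qed
  have Tcont: "isCont T \<sigma>" for \<sigma> using Tder DERIV_isCont by blast
  have T0: "T 0 = 0" unfolding T_def I_def by simp
  have Tmono: "x < y \<Longrightarrow> T x < T y" for x y
  proof -
    assume xy: "x < y"
    show ?thesis
    proof (rule DERIV_pos_imp_increasing[OF xy])
      fix z show "\<exists>y. DERIV T z :> y \<and> y > 0" using Tder fipos by blast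
    qed
  qed
  have Tinj: "T x = T y \<Longrightarrow> x = y" for x y
    using Tmono[of x y] Tmono[of y x] by (cases x y rule: linorder_cases) auto
  have Tlow: "0 \<le> \<sigma> \<Longrightarrow> \<sigma>/l \<le> T \<sigma>" and Tup: "\<sigma> \<le> 0 \<Longrightarrow> T \<sigma> \<le> \<sigma>/l" for \<sigma>
  proof -
    have mono: "x \<le> y \<Longrightarrow> T x - x/l \<le> T y - y/l" for x y
    proof (rule DERIV_nonneg_imp_nondecreasing[of x y "\<lambda>x. T x - x/l"])
      fix z
      have "((\<lambda>x. T x - x/l) has_real_derivative fi z - 1/l) (at z)"
        using l0 by (auto intro!: derivative_eq_intros Tder)
      then show "\<exists>y. ((\<lambda>x. T x - x/l) has_real_derivative y) (at z) \<and> 0 \<le> y"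
        using figt[of z] by auto
    qed
    show "0 \<le> \<sigma> \<Longrightarrow> \<sigma>/l \<le> T \<sigma>" using mono[of 0 \<sigma>] T0 by simp
    show "\<sigma> \<le> 0 \<Longrightarrow> T \<sigma> \<le> \<sigma>/l" using mono[of \<sigma> 0] T0 by simp
  qed
  have Tsurj: "\<exists>\<sigma>. T \<sigma> = t" for t
  proof -
    have "T (-(l*\<bar>t\<bar>)) \<le> -(l*\<bar>t\<bar>)/l" using Tup[of "-(l*\<bar>t\<bar>)"] l0 by simp
    also have "\<dots> \<le> t" using l0 by simp
    finally have 1: "T (-(l*\<bar>t\<bar>)) \<le> t" .
    have "t \<le> (l*\<bar>t\<bar>)/l" using l0 by simp
    also have "\<dots> \<le> T (l*\<bar>t\<bar>)" using Tlow[of "l*\<bar>t\<bar>"] l0 by simp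
    finally have 2: "t \<le> T (l*\<bar>t\<bar>)" .
    have "\<exists>x. -(l*\<bar>t\<bar>) \<le> x \<and> x \<le> l*\<bar>t\<bar> \<and> T x = t"
      by (rule IVT[of T, OF 1 2]) (use l0 Tcont in auto)
    then show ?thesis by blast
  qed
  define \<tau> where "\<tau> t = (THE \<sigma>. T \<sigma> = t)" for t
  have T\<tau>: "T (\<tau> t) = t" for t
  proof -
    obtain \<sigma> where s: "T \<sigma> = t" using Tsurj by blast
    have "\<exists>!\<sigma>. T \<sigma> = t"
    proof (rule ex1I[of _ \<sigma>])
      show "T \<sigma> = t" by (rule s)
      fix x assume "T x = t" then show "x = \<sigma>" using s by (rule_tac Tinj) simp
    qed
    then show ?thesis unfolding \<tau>_def by (rule theI')
  qed
  have \<tau>T: "\<tau> (T \<sigma>) = \<sigma>" for \<sigma>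
    by (rule Tinj[OF T\<tau>[of "T \<sigma>"]])
  have \<tau>0: "\<tau> 0 = 0" using \<tau>T[of 0] T0 by simp
  have \<tau>cont: "isCont \<tau> t" for t
  proof -
    have "isCont \<tau> (T (\<tau> t))"
      by (rule isCont_inverse_function[where d=1 and f=T and g=\<tau> and x="\<tau> t"]) (simp_all add: \<tau>T Tcont)
    then show ?thesis using T\<tau> by simp
  qed
  have \<tau>der: "(\<tau> has_real_derivative G (\<tau> t)) (at t)" for t
  proof -
    have "(\<tau> has_real_derivative inverse (fi (\<tau> t))) (at t)"
      by (rule DERIV_inverse_function[where a="t-1" and b="t+1"]) (use Tder fipos T\<tau> \<tau>cont in \<open>auto simp: less_imp_neq[symmetric]\<close>)
    then show ?thesis unfolding fi_def by simp
  qed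
  define y where "y t = (a * exp (\<tau> t), b * exp (- \<tau> t))" for t
  have sq1: "(a * exp x)^2 = a^2 * exp (2*x)" for x
    by (simp only: power_mult_distrib exp_double)
  have sq2: "(b * exp (-x))^2 = b^2 * exp (-2*x)" for x
  proof -
    have "exp (-2*x) = exp (2*(-x))" by simp
    then show ?thesis by (simp only: power_mult_distrib exp_double)
  qed
  have "sol psi (a, b) y"
    unfolding sol_def
  proof (intro conjI allI)
    show "y 0 = (a, b)" unfolding y_def \<tau>0 by simp
  next
    fix t
    have wy: "(fst (y t))^2 + (snd (y t))^2 = w (\<tau> t)" unfolding y_def w_def by (simp add: sq1 sq2)
    have d1: "((\<lambda>t. a * exp (\<tau> t)) has_real_derivative a * (exp (\<tau> t) * G (\<tau> t))) (at t)"
      by (rule DERIV_cmult[OF DERIV_chain2[OF DERIV_exp \<tau>der]])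
    have d2: "((\<lambda>t. b * exp (- \<tau> t)) has_real_derivative b * (exp (- \<tau> t) * - G (\<tau> t))) (at t)"
      by (rule DERIV_cmult[OF DERIV_chain2[OF DERIV_exp DERIV_minus[OF \<tau>der]]])
    have hv: "(y has_vector_derivative (a * (exp (\<tau> t) * G (\<tau> t)), b * (exp (- \<tau> t) * - G (\<tau> t)))) (at t)"
      unfolding y_def using d1 d2
      by (intro has_vector_derivative_Pair) (simp_all add: has_real_derivative_iff_has_vector_derivative)
    have fy: "fst (y t) = a * exp (\<tau> t)" "snd (y t) = b * exp (- \<tau> t)" unfolding y_def by simp_all
    have "vfield psi (y t) = (fst (y t) * \<phi> (w (\<tau> t)) * l, - snd (y t) * \<phi> (w (\<tau> t)) * l)"
      unfolding vfield_def wy l_def ..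
    also have "\<dots> = (a * (exp (\<tau> t) * G (\<tau> t)), b * (exp (- \<tau> t) * - G (\<tau> t)))"
      unfolding fy G_def by (simp only: mult_minus_left mult_minus_right ac_simps)
    finally have "vfield psi (y t) = (a * (exp (\<tau> t) * G (\<tau> t)), b * (exp (- \<tau> t) * - G (\<tau> t)))" .
    then show "(y has_vector_derivative vfield psi (y t)) (at t)" using hv by simp
  qed
  then show ?thesis by blast
qed

lemma sol_exists: "\<exists>y. sol psi s y"
proof (cases "s = (0,0)")
  case True
  have v0: "vfield psi (0,0) = 0" by (simp add: vfield_def zero_prod_def)
  have "sol psi s (\<lambda>t. (0,0))" unfolding sol_def True v0 by simp
  then show ?thesis by blast
next
  case False
  then show ?thesis using sol_exists_nz[of "fst s" "snd s"] by simp
qed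

lemma flow1_sol: "sol psi s y \<Longrightarrow> flow1 psi s = y 1"
proof -
  assume y: "sol psi s y"
  have "(THE y. y 0 = s \<and> (\<forall>t. (y has_vector_derivative vfield psi (y t)) (at t))) = y"
    by (rule the_equality) (use y sol_unique in \<open>auto simp: sol_def\<close>)
  then show ?thesis unfolding flow1_def by simp
qed

end

context fctx begin

lemma deriv_cone:
  assumes c: "0 < c" "1 + c^2 \<le> 3*c" and L: "(flow1 psi has_derivative L) (at x)"
  shows "Qc c v \<le> Qc c (L v)"
proof -
  define F where "F = flow1 psi"
  have key: "h^2 * Qc c v \<le> Qc c (F (x + h *\<^sub>R v) - F x)" for h
  proof -
    obtain y where y: "sol psi (x + h *\<^sub>R v) y" using sol_exists by blast
    obtain z where z: "sol psi x z" using sol_exists by blast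
    have "Qc c (y 0 - z 0) \<le> Qc c (y 1 - z 1)" by (rule cone_mono[OF c y z])
    moreover have "y 0 - z 0 = h *\<^sub>R v" using y z unfolding sol_def by simp
    moreover have "y 1 - z 1 = F (x + h *\<^sub>R v) - F x" unfolding F_def using flow1_sol[OF y] flow1_sol[OF z] by simp
    moreover have "Qc c (h *\<^sub>R v) = h^2 * Qc c v" unfolding Qc_def by (simp add: power_mult_distrib algebra_simps)
    ultimately show ?thesis by simp
  qed
  have lin: "linear L" using L by (rule has_derivative_linear)
  have hx: "((\<lambda>h::real. x + h *\<^sub>R v) has_derivative (\<lambda>h. h *\<^sub>R v)) (at 0)"
    by (auto intro!: derivative_eq_intros)
  have L0: "(F has_derivative L) (at ((\<lambda>h::real. x + h *\<^sub>R v) 0))" using L unfolding F_def by simp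
  have hd: "((\<lambda>h. F (x + h *\<^sub>R v)) has_derivative (\<lambda>h. L (h *\<^sub>R v))) (at 0)"
    using diff_chain_at[OF hx L0] by (simp add: o_def)
  have d1: "((\<lambda>h. fst (F (x + h *\<^sub>R v))) has_real_derivative fst (L v)) (at 0)"
  proof -
    have "((\<lambda>h. fst (F (x + h *\<^sub>R v))) has_derivative (\<lambda>h. fst (L (h *\<^sub>R v)))) (at 0)"
      by (rule has_derivative_fst[OF hd])
    moreover have "(\<lambda>h. fst (L (h *\<^sub>R v))) = (*) (fst (L v))"
      by (auto simp: fun_eq_iff linear_cmul[OF lin])
    ultimately show ?thesis unfolding has_field_derivative_def by simp
  qed
  have d2: "((\<lambda>h. snd (F (x + h *\<^sub>R v))) has_real_derivative snd (L v)) (at 0)"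
  proof -
    have "((\<lambda>h. snd (F (x + h *\<^sub>R v))) has_derivative (\<lambda>h. snd (L (h *\<^sub>R v)))) (at 0)"
      by (rule has_derivative_snd[OF hd])
    moreover have "(\<lambda>h. snd (L (h *\<^sub>R v))) = (*) (snd (L v))"
      by (auto simp: fun_eq_iff linear_cmul[OF lin])
    ultimately show ?thesis unfolding has_field_derivative_def by simp
  qed
  define q1 where "q1 h = (fst (F (x + h *\<^sub>R v)) - fst (F (x + 0 *\<^sub>R v))) / (h - 0)" for h
  define q2 where "q2 h = (snd (F (x + h *\<^sub>R v)) - snd (F (x + 0 *\<^sub>R v))) / (h - 0)" for h
  have l1: "(q1 \<longlongrightarrow> fst (L v)) (at 0)" using d1 unfolding has_field_derivative_iff q1_def .
  have l2: "(q2 \<longlongrightarrow> snd (L v)) (at 0)" using d2 unfolding has_field_derivative_iff q2_def .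
  have lim: "((\<lambda>h. c^2 * (q1 h)^2 - (q2 h)^2) \<longlongrightarrow> c^2 * (fst (L v))^2 - (snd (L v))^2) (at 0)"
    by (intro tendsto_intros l1 l2)
  have ev: "eventually (\<lambda>h. Qc c v \<le> c^2 * (q1 h)^2 - (q2 h)^2) (at 0)"
    unfolding eventually_at_filter
  proof (rule always_eventually, intro allI impI)
    fix h :: real assume h: "h \<noteq> 0"
    have h2: "0 < h^2" using h by simp
    define e1 where "e1 = fst (F (x + h *\<^sub>R v)) - fst (F x)"
    define e2 where "e2 = snd (F (x + h *\<^sub>R v)) - snd (F x)"
    have "h^2 * Qc c v \<le> c^2 * e1^2 - e2^2" using key[of h] unfolding Qc_def e1_def e2_def by simp
    moreover have "c^2 * (q1 h)^2 - (q2 h)^2 = (c^2 * e1^2 - e2^2) / h^2"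
    proof -
      have qq: "q1 h = e1 / h" "q2 h = e2 / h" unfolding q1_def q2_def e1_def e2_def by simp_all
      show ?thesis unfolding qq using h by (simp add: power_divide diff_divide_distrib)
    qed
    ultimately show "Qc c v \<le> c^2 * (q1 h)^2 - (q2 h)^2"
      using h2 by (simp add: le_divide_eq mult.commute)
  qed
  have "Qc c v \<le> c^2 * (fst (L v))^2 - (snd (L v))^2"
    by (rule tendsto_lowerbound[OF lim ev]) simp
  then show ?thesis unfolding Qc_def .
qed

end

lemma psi_ge:
  fixes psi :: "real \<Rightarrow> real"
  assumes u: "0 < u" "u < r0" and r0: "r0 < 1"
    and h5: "\<forall>u\<in>{0..1}. psi u \<in> {0..1}"
    and dif: "\<And>x. 0 < x \<Longrightarrow> x < 1 \<Longrightarrow> DERIV psi x :> deriv psi x"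
    and h9: "\<forall>u v. 0 < u \<and> u \<le> v \<and> v < r0 \<longrightarrow> deriv psi v \<le> deriv psi u"
  shows "u * deriv psi u \<le> psi u"
proof (rule ccontr)
  assume "\<not> ?thesis"
  then have lt: "psi u < u * deriv psi u" by simp
  define P where "P = deriv psi u"
  have pu0: "0 \<le> psi u" using h5 u r0 by auto
  have P0: "0 < P"
  proof (rule ccontr)
    assume "\<not> 0 < P"
    then have "u * P \<le> 0" using u by (simp add: mult_nonneg_nonpos)
    then show False using lt pu0 unfolding P_def by simp
  qed
  define \<delta> where "\<delta> = u * P - psi u"
  have d0: "0 < \<delta>" using lt unfolding \<delta>_def P_def by simp
  define \<epsilon> where "\<epsilon> = min (u/2) (\<delta>/(2*P))"
  have e0: "0 < \<epsilon>" unfolding \<epsilon>_def using u d0 P0 by simp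
  have eu: "\<epsilon> < u" unfolding \<epsilon>_def using u by simp
  have eP: "\<epsilon> * P \<le> \<delta>/2"
  proof -
    have "\<epsilon> \<le> \<delta>/(2*P)" unfolding \<epsilon>_def by simp
    then have "\<epsilon> * P \<le> \<delta>/(2*P) * P" using P0 by (intro mult_right_mono) auto
    also have "\<dots> = \<delta>/2" using P0 by simp
    finally show ?thesis .
  qed
  have "\<exists>l z. \<epsilon> < z \<and> z < u \<and> DERIV psi z :> l \<and> psi u - psi \<epsilon> = (u - \<epsilon>) * l"
  proof (rule MVT[OF eu])
    show "continuous_on {\<epsilon>..u} psi"
      by (intro continuous_at_imp_continuous_on ballI DERIV_isCont[OF dif]) (use e0 u r0 in auto)
    fix x assume "\<epsilon> < x" "x < u"
    then show "psi differentiable (at x)" using dif[of x] e0 u r0 real_differentiable_def by force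
  qed
  then obtain l z where z: "\<epsilon> < z" "z < u" "DERIV psi z :> l" "psi u - psi \<epsilon> = (u - \<epsilon>) * l" by blast
  have lz: "l = deriv psi z" using z(3) DERIV_imp_deriv by metis
  have "P \<le> l" unfolding P_def lz using h9 z e0 u by auto
  then have "(u - \<epsilon>) * P \<le> (u - \<epsilon>) * l" using eu by (intro mult_left_mono) auto
  moreover have "0 \<le> psi \<epsilon>" using h5 e0 eu u r0 by auto
  ultimately have "u * P - \<epsilon> * P \<le> psi u" using z(4) by (simp add: algebra_simps)
  then have "\<delta> \<le> \<epsilon> * P" unfolding \<delta>_def by linarith
  then have "\<delta> \<le> \<delta>/2" using eP by linarith
  then show False using d0 by linarith
qed

lemma psi_fctx:
  fixes r0 :: real and psi :: "real \<Rightarrow> real"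
  assumes r0: "0 < r0" "r0 < 1"
    and h5: "\<forall>u\<in>{0..1}. psi u \<in> {0..1}"
    and h6: "\<forall>k. \<forall>u\<in>{0<..<1}. ((deriv ^^ k) psi) differentiable (at u)"
    and h7: "\<forall>u\<in>{r0..1}. psi u = 1"
    and h8: "\<forall>u\<in>{0<..<r0}. deriv psi u > 0"
    and h9: "\<forall>u v. 0 < u \<and> u \<le> v \<and> v < r0 \<longrightarrow> deriv psi v \<le> deriv psi u"
  shows "fctx psi (\<lambda>u. if u < 1 then deriv psi u else 0)"
proof -
  have dif: "DERIV psi x :> deriv psi x" if "0 < x" "x < 1" for x
  proof -
    have "((deriv ^^ 0) psi) differentiable (at x)" using h6 that by (meson greaterThanLessThan_iff)
    then show ?thesis by (simp add: DERIV_deriv_iff_real_differentiable)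
  qed
  have phi1: "psi_ext psi u = 1" if "r0 \<le> u" for u
    using h7 that unfolding psi_ext_def by auto
  have D0: "deriv psi u = 0" if "r0 \<le> u" "u < 1" for u
  proof (rule DERIV_local_max[OF dif[of u], of "min u (1-u)"])
    show "\<forall>y. \<bar>u - y\<bar> < min u (1 - u) \<longrightarrow> psi y \<le> psi u"
    proof (intro allI impI)
      fix y assume "\<bar>u - y\<bar> < min u (1 - u)"
      then have "0 \<le> y" "y \<le> 1" by (auto simp: abs_less_iff)
      then have "psi y \<le> 1" using h5 by auto
      moreover have "psi u = 1" using h7 that by auto
      ultimately show "psi y \<le> psi u" by simp
    qed
  qed (use that r0 in auto)
  have ge: "u * deriv psi u \<le> psi u" if "0 < u" "u < r0" for u
    by (rule psi_ge[OF that r0(2) h5 dif h9]) auto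
  show ?thesis
  proof (unfold_locales)
    fix u :: real assume "0 \<le> u"
    then show "0 \<le> psi_ext psi u \<and> psi_ext psi u \<le> 1" using h5 unfolding psi_ext_def by auto
  next
    fix u :: real assume u: "0 < u"
    show "(psi_ext psi has_real_derivative (if u < 1 then deriv psi u else 0)) (at u)"
    proof (cases "u < 1")
      case True
      have "(psi_ext psi has_real_derivative deriv psi u) (at u)"
        by (rule has_field_derivative_transform_within_open[OF dif[OF u True], where S="{..<1}"])
           (use True in \<open>auto simp: psi_ext_def\<close>)
      then show ?thesis using True by simp
    next
      case False
      have c1: "((\<lambda>_. 1) has_real_derivative 0) (at u)" by simp
      have "(psi_ext psi has_real_derivative 0) (at u)"
        by (rule has_field_derivative_transform_within_open[OF c1, where S="{r0<..}"])
           (use False r0 phi1 in auto)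
      then show ?thesis using False by simp
    qed
  next
    fix u :: real assume u: "0 < u"
    show "0 \<le> (if u < 1 then deriv psi u else 0)"
      using h8 D0 u by (cases "u < r0") (auto simp: less_imp_le)
  next
    fix u :: real assume u: "0 < u"
    show "u * (if u < 1 then deriv psi u else 0) \<le> psi_ext psi u"
    proof (cases "u < r0")
      case True
      then show ?thesis using ge[OF u True] r0 unfolding psi_ext_def by auto
    next
      case False
      then show ?thesis using D0 phi1 by auto
    qed
  next
    fix u :: real assume u: "0 < u"
    show "0 < psi_ext psi u"
    proof (cases "u < r0")
      case True
      have "0 < u * deriv psi u" using h8 u True by auto
      then show ?thesis using ge[OF u True] r0 True unfolding psi_ext_def by auto
    next
      case False
      then show ?thesis using phi1 by auto
    qed
  qed
qed

lemma mu_cond: "1/2 < (\<mu>::real) \<Longrightarrow> \<mu> < 1 \<Longrightarrow> 1 + \<mu>^2 \<le> 3*\<mu>"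
proof -
  assume a: "1/2 < \<mu>" "\<mu> < 1"
  have "1/2 * 2 \<le> \<mu> * (3 - \<mu>)" using a by (intro mult_mono) auto
  then show ?thesis by (simp add: power2_eq_square algebra_simps)
qed

lemma mu_cond_inv: "1/2 < (\<mu>::real) \<Longrightarrow> \<mu> < 1 \<Longrightarrow> 1 + (1/\<mu>)^2 \<le> 3*(1/\<mu>)"
proof -
  assume a: "1/2 < \<mu>" "\<mu> < 1"
  have m: "1 + \<mu>^2 \<le> 3*\<mu>" by (rule mu_cond[OF a])
  have p: "0 < \<mu>^2" using a by simp
  have "(1 + (1/\<mu>)^2) * \<mu>^2 = 1 + \<mu>^2" using a by (simp add: power2_eq_square field_simps)
  also have "\<dots> \<le> 3*\<mu>" by (rule m)
  also have "\<dots> = 3*(1/\<mu>) * \<mu>^2" using a by (simp add: power2_eq_square field_simps)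
  finally show ?thesis using p by (rule mult_right_le_imp_le)
qed

lemma Qc_pos_iff: "0 < c \<Longrightarrow> 0 < Qc c w \<longleftrightarrow> \<bar>snd w\<bar> < c * \<bar>fst w\<bar>"
proof -
  assume c: "0 < c"
  have "\<bar>snd w\<bar> < c * \<bar>fst w\<bar> \<longleftrightarrow> \<not> \<bar>c * fst w\<bar> \<le> \<bar>snd w\<bar>" using c by (auto simp: abs_mult)
  also have "\<dots> \<longleftrightarrow> \<not> (c * fst w)^2 \<le> (snd w)^2" by (simp only: abs_le_square_iff)
  also have "\<dots> \<longleftrightarrow> 0 < Qc c w" unfolding Qc_def by (simp add: power_mult_distrib not_le)
  finally show ?thesis by simp
qed

lemma Qc_nonneg_iff: "0 < c \<Longrightarrow> 0 \<le> Qc (1/c) w \<longleftrightarrow> c * \<bar>snd w\<bar> \<le> \<bar>fst w\<bar>"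
proof -
  assume c: "0 < c"
  have "c * \<bar>snd w\<bar> \<le> \<bar>fst w\<bar> \<longleftrightarrow> \<bar>snd w\<bar> \<le> \<bar>fst w / c\<bar>" using c by (simp add: field_simps)
  also have "\<dots> \<longleftrightarrow> (snd w)^2 \<le> (fst w / c)^2" by (simp only: abs_le_square_iff)
  also have "\<dots> \<longleftrightarrow> 0 \<le> Qc (1/c) w" unfolding Qc_def by (simp add: power_divide)
  finally show ?thesis by simp
qed

theorem lemma5p4:
  fixes \<alpha> r0 :: real and psi :: "real \<Rightarrow> real"
  assumes "0 < \<alpha>" "\<alpha> < 1" "0 < r0" "r0 < 1"
    and "\<forall>u\<in>{0..1}. psi u \<in> {0..1}"
    and "\<forall>k. \<forall>u\<in>{0<..<1}. ((deriv ^^ k) psi) differentiable (at u)"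
    and "\<forall>u\<in>{r0..1}. psi u = 1"
    and "\<forall>u\<in>{0<..<r0}. deriv psi u > 0"
    and "\<forall>u v. 0 < u \<and> u \<le> v \<and> v < r0 \<longrightarrow> deriv psi v \<le> deriv psi u"
    and "\<forall>u\<in>{0..r0/2}. psi u = (u / r0) powr \<alpha>"
  shows "\<exists>\<mu>0. 0 < \<mu>0 \<and> \<mu>0 < 1 \<and>
           (\<forall>\<mu>. \<mu>0 < \<mu> \<and> \<mu> < 1 \<longrightarrow>
              (\<forall>p L. DG_at psi r0 p L \<longrightarrow>
                 (\<forall>v\<in>Kplus \<mu>. L v \<in> Kplus \<mu>) \<and>
                 (\<forall>w. L w \<in> Kminus \<mu> \<longrightarrow> w \<in> Kminus \<mu>)))"
proof -
  interpret fctx psi "\<lambda>u. if u < 1 then deriv psi u else 0"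
    by (rule psi_fctx[OF assms(3,4) assms(5-9)])
  have main: "(\<forall>v\<in>Kplus \<mu>. L v \<in> Kplus \<mu>) \<and> (\<forall>w. L w \<in> Kminus \<mu> \<longrightarrow> w \<in> Kminus \<mu>)"
    if \<mu>: "1/2 < \<mu> \<and> \<mu> < 1" and DG: "DG_at psi r0 p L" for \<mu> :: real and p L
  proof -
    have m0: "0 < \<mu>" using \<mu> by simp
    have mc: "1 + \<mu>^2 \<le> 3*\<mu>" using mu_cond \<mu> by blast
    have mci: "1 + (1/\<mu>)^2 \<le> 3*(1/\<mu>)" using mu_cond_inv \<mu> by blast
    have im0: "0 < 1/\<mu>" using m0 by simp
    from DG consider (fl) x where "(flow1 psi has_derivative L) (at x)" | (A) "L = Aeig"
      unfolding DG_at_def by blast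
    then show "(\<forall>v\<in>Kplus \<mu>. L v \<in> Kplus \<mu>) \<and> (\<forall>w. L w \<in> Kminus \<mu> \<longrightarrow> w \<in> Kminus \<mu>)"
    proof cases
      case fl
      show ?thesis
      proof (intro conjI ballI allI impI)
        fix v assume "v \<in> Kplus \<mu>"
        then have "0 < Qc \<mu> v" unfolding Kplus_def using Qc_pos_iff[OF m0] by simp
        also have "Qc \<mu> v \<le> Qc \<mu> (L v)" by (rule deriv_cone[OF m0 mc fl])
        finally show "L v \<in> Kplus \<mu>" unfolding Kplus_def using Qc_pos_iff[OF m0] by simp
      next
        fix w assume Lw: "L w \<in> Kminus \<mu>"
        show "w \<in> Kminus \<mu>"
        proof (rule ccontr)
          assume "w \<notin> Kminus \<mu>"
          then have "\<mu> * \<bar>snd w\<bar> \<le> \<bar>fst w\<bar>" unfolding Kminus_def by (simp add: mult.commute)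
          then have "0 \<le> Qc (1/\<mu>) w" using Qc_nonneg_iff[OF m0] by simp
          also have "Qc (1/\<mu>) w \<le> Qc (1/\<mu>) (L w)" by (rule deriv_cone[OF im0 mci fl])
          finally have "\<mu> * \<bar>snd (L w)\<bar> \<le> \<bar>fst (L w)\<bar>" using Qc_nonneg_iff[OF m0] by simp
          then show False using Lw unfolding Kminus_def by (simp add: mult.commute)
        qed
      qed
    next
      case A
      have l1: "1 < lam" by (rule lam_gt1)
      show ?thesis
      proof (intro conjI ballI allI impI)
        fix v assume "v \<in> Kplus \<mu>"
        then have v: "\<bar>snd v\<bar> < \<mu> * \<bar>fst v\<bar>" unfolding Kplus_def by simp
        have "\<bar>snd v\<bar> * 1 \<le> \<bar>snd v\<bar> * lam" using l1 by (intro mult_left_mono) auto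
        then have "\<bar>snd v\<bar> / lam \<le> \<bar>snd v\<bar>" using l1 by (simp add: divide_le_eq)
        then have "\<bar>snd v / lam\<bar> \<le> \<bar>snd v\<bar>" using l1 by (simp add: abs_divide)
        also have "\<dots> < \<mu> * \<bar>fst v\<bar>" by (rule v)
        also have "\<dots> \<le> \<mu> * \<bar>lam * fst v\<bar>" using l1 m0
          by (intro mult_left_mono) (auto simp: abs_mult mult_le_cancel_right1)
        finally show "L v \<in> Kplus \<mu>" unfolding Kplus_def A Aeig_def by simp
      next
        fix w assume "L w \<in> Kminus \<mu>"
        then have w: "\<bar>lam * fst w\<bar> < \<mu> * \<bar>snd w / lam\<bar>" unfolding Kminus_def A Aeig_def by simp
        have "\<bar>fst w\<bar> \<le> \<bar>lam * fst w\<bar>" using l1 by (auto simp: abs_mult mult_le_cancel_right1)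
        also have "\<dots> < \<mu> * \<bar>snd w / lam\<bar>" by (rule w)
        also have "\<dots> \<le> \<mu> * \<bar>snd w\<bar>"
        proof -
          have "\<bar>snd w\<bar> * 1 \<le> \<bar>snd w\<bar> * lam" using l1 by (intro mult_left_mono) auto
          then have "\<bar>snd w / lam\<bar> \<le> \<bar>snd w\<bar>" using l1 by (simp add: abs_divide divide_le_eq)
          then show ?thesis using m0 by (intro mult_left_mono) auto
        qed
        finally show "w \<in> Kminus \<mu>" unfolding Kminus_def by simp
      qed
    qed
  qed
  show ?thesis by (rule exI[of _ "1/2"]) (use main in auto)
qed

end
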